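(* Let $Y_1,Y_2,\ldots$ be i.i.d. Bernoulli$(1/2)$ and let $(Z^k)_k$ be generated by the bit-drop scheme described in the context, independently of $(Y_i)$; let $L^a_n(k)$ be the length of a longest common subsequence of $Z^k$ and $Y_1\ldots Y_n$. There is a constant $c>0$ such that for every $n$ and every $\nu<0.5$ with $\nu n$ a nonnegative integer, $$P\big(L^a_n(\nu n)=\nu n\big)\geq 1-e^{-c(0.5-\nu)^2n}.$$
   Context: Bit-drop scheme: let $V_1,V_2,\ldots$ be i.i.d. Bernoulli$(1/2)$ and let $T_3,T_4,\ldots$ be independent, independent of $(V_k)$, with $T_{k+1}$ uniform on $\{2,\ldots,k\}$. Set $Z^2:=V_1V_2$ and, given $Z^k=Z^k_1\ldots Z^k_k$, define $Z^{k+1}_j:=Z^k_j$ for $j<T_{k+1}$, $Z^{k+1}_{T_{k+1}}:=V_{k+1}$, $Z^{k+1}_j:=Z^k_{j-1}$ for $T_{k+1}<j\le k+1$. Convention: $Z^0$ empty, $Z^1:=V_1$. *)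

theory Defs
  imports "HOL-Probability.Probability" "HOL-Library.Sublist"
begin

text \<open>A fair bit: Bernoulli(1/2), bits encoded as bool (True = 1).\<close>
definition coin :: "bool pmf" where
  "coin = bernoulli_pmf (1/2)"

text \<open>Z^0 empty, Z^1 = V1, Z^2 = V1 V2,
  and Z^(k+1) is obtained from Z^k (k >= 2) by inserting a fresh independent fair bit
  V_(k+1) at (1-based) position T_(k+1), T_(k+1) uniform on {2..k}, independent of everything.\<close>
fun Zpmf :: "nat \<Rightarrow> bool list pmf" where
  "Zpmf 0 = return_pmf []"
| "Zpmf (Suc 0) = map_pmf (\<lambda>v. [v]) coin"
| "Zpmf (Suc (Suc 0)) = bind_pmf (Zpmf (Suc 0)) (\<lambda>z. map_pmf (\<lambda>v. z @ [v]) coin)"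
| "Zpmf (Suc (Suc (Suc m))) =
     bind_pmf (Zpmf (Suc (Suc m))) (\<lambda>z.
     bind_pmf (pmf_of_set {2..Suc (Suc m)}) (\<lambda>t.
     map_pmf (\<lambda>v. take (t - 1) z @ v # drop (t - 1) z) coin))"

fun Ypmf :: "nat \<Rightarrow> bool list pmf" where
  "Ypmf 0 = return_pmf []"
| "Ypmf (Suc n) = bind_pmf (Ypmf n) (\<lambda>ys. map_pmf (\<lambda>y. ys @ [y]) coin)"

definition lcs_len :: "'a list \<Rightarrow> 'a list \<Rightarrow> nat" where
  "lcs_len xs ys = Max {length zs | zs. subseq zs xs \<and> subseq zs ys}"

end

theory Submission
  imports Defs
begin


lemma subseq_snoc:
  "subseq (xs @ [x]) (ys @ [y]) \<longleftrightarrow> (x = y \<and> subseq xs ys) \<or> subseq (xs @ [x]) ys"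
proof
  assume "subseq (xs @ [x]) (ys @ [y])"
  then obtain zs1 zs2 where eq: "ys @ [y] = zs1 @ zs2" and s1: "subseq xs zs1" and s2: "subseq [x] zs2"
    using list_emb_appendD by blast
  from s2 have "zs2 \<noteq> []" by auto
  then obtain zs2' where z2: "zs2 = zs2' @ [y]" and ys: "ys = zs1 @ zs2'"
    using eq by (metis append_assoc append_butlast_last_id butlast_append butlast_snoc last_appendR last_snoc)
  show "(x = y \<and> subseq xs ys) \<or> subseq (xs @ [x]) ys"
  proof (cases "x \<in> set zs2'")
    case True
    then have "subseq [x] zs2'" by (simp add: subseq_singleton_left)
    then have "subseq (xs @ [x]) ys" using s1 ys by (simp add: list_emb_append_mono)
    then show ?thesis by simp
  next
    case False
    with s2 z2 have "x = y" by (auto simp: subseq_singleton_left)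
    moreover have "subseq xs ys" using s1 ys by auto
    ultimately show ?thesis by simp
  qed
next
  assume "(x = y \<and> subseq xs ys) \<or> subseq (xs @ [x]) ys"
  then show "subseq (xs @ [x]) (ys @ [y])"
    by (auto intro: list_emb_append_mono subseq_rev_drop_many)
qed


lemma prob_bind_pmf:
  "measure_pmf.prob (bind_pmf M N) X = measure_pmf.expectation M (\<lambda>x. measure_pmf.prob (N x) X)"
proof -
  have int: "integrable (measure_pmf M) (\<lambda>x. measure_pmf.prob (N x) X)"
    by (intro measure_pmf.integrable_const_bound[where B=1]) (auto split: split_indicator)
  have "emeasure (measure_pmf (bind_pmf M N)) X = (\<integral>\<^sup>+x. emeasure (N x) X \<partial>M)" by simp
  also have "\<dots> = (\<integral>\<^sup>+x. ennreal (measure_pmf.prob (N x) X) \<partial>M)"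
    by (simp add: measure_pmf.emeasure_eq_measure)
  also have "\<dots> = ennreal (measure_pmf.expectation M (\<lambda>x. measure_pmf.prob (N x) X))"
    by (rule nn_integral_eq_integral[OF int]) auto
  finally show ?thesis
    by (simp add: measure_pmf.emeasure_eq_measure)
qed

lemma prob_coin: "measure_pmf.prob coin A = (if True \<in> A then 1/2 else 0) + (if False \<in> A then 1/2 else 0)"
proof -
  have "A = A \<inter> {True, False}" by auto
  then have "measure_pmf.prob coin A = sum (pmf coin) (A \<inter> {True, False})"
    by (metis finite.emptyI finite.insertI finite_Int measure_measure_pmf_finite)
  then show ?thesis by (cases "True \<in> A"; cases "False \<in> A") (auto simp: coin_def)
qed

fun g :: "nat \<Rightarrow> nat \<Rightarrow> real" where
  "g n 0 = 1"
| "g 0 (Suc m) = 0"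
| "g (Suc n) (Suc m) = (g n m + g n (Suc m)) / 2"

lemma prob_Y: "length z = m \<Longrightarrow> measure_pmf.prob (Ypmf n) {y. subseq z y} = g n m"
proof (induction n arbitrary: z m)
  case 0
  then show ?case by (cases m) auto
next
  case (Suc n)
  show ?case
  proof (cases z rule: rev_cases)
    case Nil
    then show ?thesis using Suc.prems by simp
  next
    case (snoc z' b)
    define A where "A = {ys. subseq z' ys}"
    define B where "B = {ys. subseq z ys}"
    have BA: "ys \<in> B \<Longrightarrow> ys \<in> A" for ys
      unfolding A_def B_def snoc using list_emb_appendD by fastforce
    have inner: "measure_pmf.prob coin {y. subseq z (ys @ [y])}
        = indicator A ys / 2 + indicator B ys / 2" for ys
    proof -
      have "measure_pmf.prob coin {y. subseq z (ys @ [y])}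
          = measure_pmf.prob coin {v. (b = v \<and> ys \<in> A) \<or> ys \<in> B}"
        by (simp add: snoc subseq_snoc A_def B_def)
      also have "\<dots> = indicator A ys / 2 + indicator B ys / 2"
        using BA[of ys] by (cases b; cases "ys \<in> A"; cases "ys \<in> B") (auto simp: prob_coin)
      finally show ?thesis .
    qed
    have intA: "integrable (measure_pmf (Ypmf n)) (\<lambda>ys. indicator A ys / 2 :: real)"
      by (intro measure_pmf.integrable_const_bound[where B=1]) (auto split: split_indicator)
    have intB: "integrable (measure_pmf (Ypmf n)) (\<lambda>ys. indicator B ys / 2 :: real)"
      by (intro measure_pmf.integrable_const_bound[where B=1]) (auto split: split_indicator)
    have "measure_pmf.prob (Ypmf (Suc n)) {y. subseq z y}
        = measure_pmf.expectation (Ypmf n) (\<lambda>ys. indicator A ys / 2 + indicator B ys / 2)"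
      by (simp add: prob_bind_pmf inner)
    also have "\<dots> = measure_pmf.prob (Ypmf n) A / 2 + measure_pmf.prob (Ypmf n) B / 2"
      by (simp add: Bochner_Integration.integral_add[OF intA intB])
    also have "\<dots> = g n (length z') / 2 + g n (length z) / 2"
      unfolding A_def B_def using Suc.IH by simp
    also have "\<dots> = g (Suc n) m"
      using Suc.prems snoc by auto
    finally show ?thesis .
  qed
qed


lemma Z_len: "z \<in> set_pmf (Zpmf k) \<Longrightarrow> length z = k"
proof (induction k arbitrary: z rule: Zpmf.induct)
  case 1 then show ?case by simp
next
  case 2 then show ?case by auto
next
  case 3 then show ?case by auto
next
  case (4 m) then show ?case by auto
qed

lemma lcs_full: "subseq z y \<Longrightarrow> lcs_len z y = length z"
  unfolding lcs_len_def
proof (rule Max_eqI)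
  have "{length zs |zs. subseq zs z \<and> subseq zs y} \<subseteq> {..length z}"
    by (auto dest: list_emb_length)
  then show "finite {length zs |zs. subseq zs z \<and> subseq zs y}"
    using finite_subset by blast
qed (auto dest: list_emb_length)

lemma prob_pair: "measure_pmf.prob (pair_pmf (Zpmf k) (Ypmf n)) {(z, y). lcs_len z y = k} \<ge> g n k"
proof -
  have "measure_pmf.prob (pair_pmf (Zpmf k) (Ypmf n)) {(z, y). lcs_len z y = k}
     \<ge> measure_pmf.prob (pair_pmf (Zpmf k) (Ypmf n)) {(z, y). length z = k \<and> subseq z y}"
    by (intro measure_pmf.finite_measure_mono) (auto simp: lcs_full)
  moreover have "measure_pmf.prob (pair_pmf (Zpmf k) (Ypmf n)) {(z, y). length z = k \<and> subseq z y}
     = measure_pmf.expectation (Zpmf k) (\<lambda>z. measure_pmf.prob (Ypmf n) {y. length z = k \<and> subseq z y})"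
  proof -
    have e1: "pair_pmf (Zpmf k) (Ypmf n) = bind_pmf (Zpmf k) (\<lambda>z. map_pmf (Pair z) (Ypmf n))"
      by (simp add: pair_pmf_def map_pmf_def)
    have e2: "Pair x -` {(z, y). length z = k \<and> subseq z y} = {y. length x = k \<and> subseq x y}" for x
      by auto
    show ?thesis by (simp only: e1 e2 prob_bind_pmf measure_map_pmf)
  qed
  moreover have "\<dots> = measure_pmf.expectation (Zpmf k) (\<lambda>z. g n k)"
    by (intro integral_cong_AE) (auto simp: AE_measure_pmf_iff Z_len prob_Y)
  ultimately show ?thesis by simp
qed


lemma g_tail: "0 < l \<Longrightarrow> l \<le> (1::real) \<Longrightarrow> (1 - g n m) * l ^ m \<le> ((1 + l) / 2) ^ n"
proof (induction n arbitrary: m)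
  case 0
  then show ?case using power_le_one[of l m] by (cases m) auto
next
  case (Suc n)
  show ?case
  proof (cases m)
    case 0 then show ?thesis using Suc.prems by simp
  next
    case (Suc m')
    have a: "(1 - g n m') * l ^ m' \<le> ((1 + l) / 2) ^ n" using Suc.IH Suc.prems by blast
    have b: "(1 - g n (Suc m')) * l ^ Suc m' \<le> ((1 + l) / 2) ^ n" using Suc.IH Suc.prems by blast
    have "(1 - g (Suc n) m) * l ^ m = ((1 - g n m') * l ^ m') * l / 2 + (1 - g n (Suc m')) * l ^ Suc m' / 2"
      using Suc by (simp add: field_simps)
    also have "\<dots> \<le> ((1 + l) / 2) ^ n * l / 2 + ((1 + l) / 2) ^ n / 2"
      using a b Suc.prems by (intro add_mono divide_right_mono mult_right_mono) auto
    also have "\<dots> = ((1 + l) / 2) ^ Suc n" by (simp add: field_simps)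
    finally show ?thesis .
  qed
qed

theorem lemma14:
  shows "\<exists>c::real. c > 0 \<and>
    (\<forall>(n::nat) (\<nu>::real) (k::nat). \<nu> < 1/2 \<and> \<nu> * real n = real k \<longrightarrow>
      measure_pmf.prob (pair_pmf (Zpmf k) (Ypmf n)) {(z, y). lcs_len z y = k}
        \<ge> 1 - exp (- c * (1/2 - \<nu>)^2 * real n))"
proof (intro exI[of _ "1/4"] conjI allI impI)
  fix n :: nat and \<nu> :: real and k :: nat
  assume H: "\<nu> < 1/2 \<and> \<nu> * real n = real k"
  have P: "g n k \<le> measure_pmf.prob (pair_pmf (Zpmf k) (Ypmf n)) {(z, y). lcs_len z y = k}"
    by (rule prob_pair)
  show "measure_pmf.prob (pair_pmf (Zpmf k) (Ypmf n)) {(z, y). lcs_len z y = k}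
        \<ge> 1 - exp (- (1/4) * (1/2 - \<nu>)^2 * real n)"
  proof (cases "k = 0")
    case True
    then show ?thesis using P by (simp add: add_nonneg_nonneg) (smt (verit) exp_gt_zero)
  next
    case False
    then have n0: "n > 0" using H by (cases n) auto
    have nu: "\<nu> = real k / real n" using H n0 by (simp add: field_simps)
    have nupos: "\<nu> > 0" using nu n0 False by simp
    define d where "d = 1/2 - \<nu>"
    have d0: "0 < d" "d \<le> 1/2" using H nupos by (auto simp: d_def)
    define l where "l = 1 - d/2"
    have l0: "0 < l" "l \<le> 1" using d0 by (auto simp: l_def)
    have T: "(1 - g n k) * l ^ k \<le> ((1 + l) / 2) ^ n" by (rule g_tail[OF l0])
    have q: "(1 + l) / 2 \<le> exp (- d / 4)"
      using exp_ge_add_one_self[of "- d / 4"] by (simp add: l_def)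
    have qn: "((1 + l) / 2) ^ n \<le> exp (- d / 4 * real n)"
      using power_mono[OF q, of n] d0 by (simp add: l_def exp_of_nat_mult[symmetric] mult.commute)
    have lnl: "- (d/2) - 2 * (d/2)^2 \<le> ln l"
      unfolding l_def using d0 by (intro ln_one_minus_pos_lower_bound) auto
    have lb: "exp (- (d/2) - 2 * (d/2)^2) \<le> l"
      using lnl l0 by (metis exp_le_cancel_iff exp_ln)
    have lk: "exp (real k * (- (d/2) - 2 * (d/2)^2)) \<le> l ^ k"
      using power_mono[OF lb, of k] by (simp add: exp_of_nat_mult)
    have "1 - g n k \<le> 0 \<or> (1 - g n k) * exp (real k * (- (d/2) - 2 * (d/2)^2)) \<le> (1 - g n k) * l ^ k"
      using lk by (auto intro: mult_left_mono)
    then have "(1 - g n k) * exp (real k * (- (d/2) - 2 * (d/2)^2)) \<le> exp (- d / 4 * real n)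
               \<or> 1 - g n k \<le> 0"
      using T qn by linarith
    then have "1 - g n k \<le> exp (- d / 4 * real n - real k * (- (d/2) - 2 * (d/2)^2))"
    proof
      assume A: "(1 - g n k) * exp (real k * (- (d/2) - 2 * (d/2)^2)) \<le> exp (- d / 4 * real n)"
      have "1 - g n k \<le> exp (- d / 4 * real n) / exp (real k * (- (d/2) - 2 * (d/2)^2))"
        using A by (simp add: pos_le_divide_eq)
      then show ?thesis by (simp add: exp_diff)
    qed (smt (verit) exp_gt_zero)
    also have "\<dots> \<le> exp (- (1/4) * d^2 * real n)"
    proof -
      have k: "real k = (1/2 - d) * real n" using H by (simp add: d_def)
      have "- d / 4 * real n - real k * (- (d/2) - 2 * (d/2)^2) = - (1/4) * d^2 * real n - d^3/2 * real n"
        unfolding k by (simp add: power2_eq_square power3_eq_cube algebra_simps)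
      also have "\<dots> \<le> - (1/4) * d^2 * real n" using d0 by simp
      finally show ?thesis by simp
    qed
    finally show ?thesis using P by (simp add: d_def)
  qed
qed simp

end
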